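(* Let $(Q,\le_Q)$ be a non-empty quasi-order. The map $f:\mathsf{T_f}(Q)\to i^F_{\omega^\omega}(Q)$ is an order-embedding: for all $\sigma,\tau\in\mathsf{T_f}(Q)$, $\sigma\le_T\tau$ iff $f(\sigma)\preceq f(\tau)$.
   Context: Trees: $\mathsf{T_f}(Q)$ is the smallest class containing the leaf $\cdot q$ for each $q\in Q$, and containing $\cdot(\tau_0,\dots,\tau_{k-1})$ (an unlabelled root whose children are the $\tau_i$) for every finite set $\{\tau_0,\dots,\tau_{k-1}\}\subseteq\mathsf{T_f}(Q)$ with $k\ge1$. Its order $\le_T$ is defined recursively: - $\cdot x\le_T\cdot y$ iff $x\le_Q y$; - $\cdot x\le_T\cdot(\tau_j)_{j<l}$ iff $\cdot x\le_T\tau_j$ for some $j$; - $\cdot(\sigma_i)_{i<k}\le_T\cdot(\tau_j)_{j<l}$ iff every $\sigma_i$ is $\le_T$ some $\tau_j$; - a non-leaf tree is never $\le_T$ a leaf. Sequences: a transfinite sequence over $Q$ of length $\alpha$ (with $\alpha\ne0$) is a function $\sigma:\alpha\to Q$. Define $\sigma\preceq\tau$ if there is a strictly increasing $f:|\sigma|\to|\tau|$ with $\sigma(i)\le_Q\tau(f(i))$ for all $i$. The concatenation $\sigma+\tau$ places a copy of $\tau$ after $\sigma$. The sequence $\rho^\omega$ has length $|\rho|\cdot\omega$ and value $\rho^\omega(|\rho|\cdot\delta+\iota)=\rho(\iota)$ for $\delta<\omega$ and $\iota<|\rho|$. The sequence $\sigma$ is indecomposable if it embeds into each of its proper tails $i\mapsto\sigma(\delta+i)$,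 $0<\delta<|\sigma|$. $i^F_{\omega^\omega}(Q)$ is the set of indecomposable sequences over $Q$ with finite range and length $<\omega^\omega$, ordered by $\preceq$. The map $f$ is defined recursively: - $f(\cdot q)=\langle q\rangle$, the length-one sequence; - $f(\cdot(\tau_0,\dots,\tau_{k-1}))=(f(\tau_0)+f(\tau_1)+\cdots+f(\tau_{k-1}))^\omega$. A tree of height $n$ is sent to a sequence of length $\omega^n$ whose range is the set of leaf labels, so $f$ indeed lands in $i^F_{\omega^\omega}(Q)$. *)

theory Defs
  imports Main
begin

text \<open>Trees with leaves labelled in 'q; an inner node has a non-empty finite set of
  children, represented by a list which is required to be non-empty and duplicate-free
  (predicate wf_tree).  The list order is an arbitrary enumeration of the children.\<close>

datatype 'q tree = Leaf 'q | Node "'q tree list"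

fun wf_tree :: "'q tree \<Rightarrow> bool" where
  "wf_tree (Leaf q) = True"
| "wf_tree (Node ts) = (ts \<noteq> [] \<and> distinct ts \<and> (\<forall>t\<in>set ts. wf_tree t))"

fun tree_le :: "('q \<Rightarrow> 'q \<Rightarrow> bool) \<Rightarrow> 'q tree \<Rightarrow> 'q tree \<Rightarrow> bool" where
  "tree_le le (Leaf x) (Leaf y) = le x y"
| "tree_le le (Leaf x) (Node ts) = (\<exists>t\<in>set ts. tree_le le (Leaf x) t)"
| "tree_le le (Node ss) (Node ts) = (\<forall>s\<in>set ss. \<exists>t\<in>set ts. tree_le le s t)"
| "tree_le le (Node ss) (Leaf y) = False"

text \<open>A transfinite sequence is represented up to order isomorphism of its domain:
  a well-ordered set of positions (a set of lists of naturals under the lexicographic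
  order pos_less) together with a labelling of the positions.  Its length is the
  order type of the position set.\<close>

type_synonym 'q tseq = "nat list set \<times> (nat list \<Rightarrow> 'q)"

definition pos_less :: "nat list \<Rightarrow> nat list \<Rightarrow> bool" where
  "pos_less xs ys \<longleftrightarrow> (xs, ys) \<in> lexord {(u, v). u < v}"

definition seq_emb :: "('q \<Rightarrow> 'q \<Rightarrow> bool) \<Rightarrow> 'q tseq \<Rightarrow> 'q tseq \<Rightarrow> bool" where
  "seq_emb le \<sigma> \<tau> \<longleftrightarrow> (\<exists>g. g ` fst \<sigma> \<subseteq> fst \<tau>
      \<and> (\<forall>i\<in>fst \<sigma>. \<forall>j\<in>fst \<sigma>. pos_less i j \<longrightarrow> pos_less (g i) (g j))
      \<and> (\<forall>i\<in>fst \<sigma>. le (snd \<sigma> i) (snd \<tau> (g i))))"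

definition single_seq :: "'q \<Rightarrow> 'q tseq" where
  "single_seq q = ({[]}, \<lambda>_. q)"

text \<open>Concatenation of a finite list of sequences: the k-th summand occupies the
  positions k # i, placed after all earlier summands.\<close>
definition concat_seqs :: "'q tseq list \<Rightarrow> 'q tseq" where
  "concat_seqs ss = ({k # i | k i. k < length ss \<and> i \<in> fst (ss ! k)},
                     \<lambda>x. snd (ss ! hd x) (tl x))"

text \<open>rho^omega: the delta-th copy of rho occupies the positions delta # i.\<close>
definition omega_seq :: "'q tseq \<Rightarrow> 'q tseq" where
  "omega_seq \<rho> = ({d # i | d i. i \<in> fst \<rho>}, \<lambda>x. snd \<rho> (tl x))"

fun tree_seq :: "'q tree \<Rightarrow> 'q tseq" where
  "tree_seq (Leaf q) = single_seq q"
| "tree_seq (Node ts) = omega_seq (concat_seqs (map tree_seq ts))"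

end

theory Submission
  imports Defs
begin

lemma pos_less_cons[simp]: "pos_less (a#xs) (b#ys) \<longleftrightarrow> a<b \<or> a=b \<and> pos_less xs ys"
  by (auto simp: pos_less_def)

lemma pos_less_Nil[simp]: "\<not> pos_less xs []"
  by (simp add: pos_less_def)

lemma pos_node: "x \<in> fst (tree_seq (Node ts)) \<longleftrightarrow> (\<exists>d j q. x = d#j#q \<and> j < length ts \<and> q \<in> fst (tree_seq (ts!j)))"
  by (auto simp: omega_seq_def concat_seqs_def)

lemma lab_node[simp]: "j < length ts \<Longrightarrow> snd (tree_seq (Node ts)) (d#j#q) = snd (tree_seq (ts!j)) q"
  by (simp add: omega_seq_def concat_seqs_def)

lemma pos_leaf[simp]: "fst (tree_seq (Leaf q)) = {[]}" "snd (tree_seq (Leaf x)) p = x"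
  by (auto simp: single_seq_def)

declare tree_seq.simps[simp del]

lemma nonempty: "wf_tree t \<Longrightarrow> fst (tree_seq t) \<noteq> {}"
proof (induction t)
  case (Leaf x) then show ?case by simp
next
  case (Node ts)
  then have "ts \<noteq> []" "wf_tree (ts!0)" by auto
  with Node have "fst (tree_seq (ts!0)) \<noteq> {}" by (meson nth_mem length_greater_0_conv)
  then obtain q where "q \<in> fst (tree_seq (ts!0))" by auto
  then have "0#0#q \<in> fst (tree_seq (Node ts))" using \<open>ts \<noteq> []\<close> by (auto simp: pos_node)
  then show ?case by auto
qed

lemma tail_emb:
  assumes "p \<in> fst (tree_seq s)"
  shows "\<exists>h. \<forall>x\<in>fst(tree_seq s). h x \<in> fst(tree_seq s) \<and> (h x = p \<or> pos_less p (h x))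
     \<and> snd (tree_seq s) (h x) = snd (tree_seq s) x
     \<and> (\<forall>y\<in>fst(tree_seq s). pos_less x y \<longrightarrow> pos_less (h x) (h y))"
proof (cases s)
  case (Leaf x)
  then show ?thesis using assms by (rule_tac x=id in exI) auto
next
  case (Node ts)
  then obtain d0 i0 q0 where p: "p = d0#i0#q0" using assms by (auto simp: pos_node)
  show ?thesis
    apply (rule_tac x="\<lambda>x. (hd x + d0 + 1) # tl x" in exI)
    using p Node by (auto simp: pos_node)
qed

lemma block:
  assumes P: "P = fst (tree_seq s)" and wf: "wf_tree s"
    and Gin: "\<forall>x\<in>P. G x \<in> fst(tree_seq (Node ts))"
    and Gmono: "\<forall>x\<in>P. \<forall>y\<in>P. pos_less x y \<longrightarrow> pos_less (G x) (G y)"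
    and Glab: "\<forall>x\<in>P. le (snd (tree_seq s) x) (snd (tree_seq (Node ts)) (G x))"
    and bound: "\<forall>x\<in>P. hd (G x) \<le> E"
  shows "\<exists>j<length ts. seq_emb le (tree_seq s) (tree_seq (ts!j))"
proof -
  define A where "A = hd ` G ` P"
  have Afin: "finite A" using bound by (auto simp: A_def intro: finite_subset[of _ "{..E}"])
  have Ane: "A \<noteq> {}" using nonempty[OF wf] P by (auto simp: A_def)
  define e where "e = Max A"
  have eA: "e \<in> A" using Afin Ane by (simp add: e_def)
  have emax: "\<And>x. x \<in> P \<Longrightarrow> hd (G x) \<le> e" using Afin by (auto simp: e_def A_def)
  define B where "B = {hd (tl (G x)) | x. x\<in>P \<and> hd (G x) = e}"
  have Bsub: "B \<subseteq> {..<length ts}"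
    using Gin by (auto simp: B_def pos_node)
  have Bfin: "finite B" using Bsub finite_subset by blast
  have Bne: "B \<noteq> {}" using eA by (auto simp: A_def B_def)
  define j where "j = Max B"
  have "j \<in> B" using Bfin Bne by (simp add: j_def)
  then obtain ps where ps: "ps \<in> P" "hd (G ps) = e" "hd (tl (G ps)) = j" by (auto simp: B_def)
  have jmax: "\<And>x. x \<in> P \<Longrightarrow> hd (G x) = e \<Longrightarrow> hd (tl (G x)) \<le> j"
  proof -
    fix x assume "x \<in> P" "hd (G x) = e"
    then have "hd (tl (G x)) \<in> B" by (auto simp: B_def)
    then show "hd (tl (G x)) \<le> j" using Bfin by (simp add: j_def)
  qed
  obtain h where h: "\<forall>x\<in>P. h x \<in> P \<and> (h x = ps \<or> pos_less ps (h x))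
     \<and> snd (tree_seq s) (h x) = snd (tree_seq s) x
     \<and> (\<forall>y\<in>P. pos_less x y \<longrightarrow> pos_less (h x) (h y))"
    using tail_emb[of ps s] ps(1) P by auto
  have form: "\<exists>q. G (h x) = e#j#q \<and> j < length ts \<and> q \<in> fst (tree_seq (ts!j))" if x: "x \<in> P" for x
  proof -
    have hx: "h x \<in> P" "h x = ps \<or> pos_less ps (h x)" using h x by auto
    obtain d' j' q' where g: "G (h x) = d'#j'#q'" "j' < length ts" "q' \<in> fst (tree_seq (ts!j'))"
      using Gin hx(1) by (auto simp: pos_node)
    obtain d0 j0 q0 where g0: "G ps = d0#j0#q0"
      using Gin ps(1) by (auto simp: pos_node)
    have le1: "G (h x) = G ps \<or> pos_less (G ps) (G (h x))" using hx Gmono ps(1) by auto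
    have "d' \<le> e" using emax[OF hx(1)] g by simp
    with le1 g g0 ps have de: "d' = e" by auto
    have "j' \<le> j" using jmax[OF hx(1)] g de by simp
    with le1 g g0 ps de have "j' = j" by auto
    with g de show ?thesis by auto
  qed
  have jl: "j < length ts" using form ps(1) by blast
  have "seq_emb le (tree_seq s) (tree_seq (ts!j))"
    unfolding seq_emb_def
  proof (rule exI[of _ "\<lambda>x. tl (tl (G (h x)))"], intro conjI ballI impI)
    show "(\<lambda>x. tl (tl (G (h x)))) ` fst (tree_seq s) \<subseteq> fst (tree_seq (ts ! j))"
      using form P by force
  next
    fix x y assume xy: "x \<in> fst (tree_seq s)" "y \<in> fst (tree_seq s)" "pos_less x y"
    then have "pos_less (G (h x)) (G (h y))" using h Gmono P by auto
    then show "pos_less (tl (tl (G (h x)))) (tl (tl (G (h y))))"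
      using form[of x] form[of y] xy P by auto
  next
    fix x assume x: "x \<in> fst (tree_seq s)"
    then obtain q where q: "G (h x) = e#j#q" using form P by blast
    have "le (snd (tree_seq s) (h x)) (snd (tree_seq (Node ts)) (G (h x)))"
    proof -
      have "h x \<in> P" using h x P by auto
      then show ?thesis using Glab by blast
    qed
    then show "le (snd (tree_seq s) x) (snd (tree_seq (ts ! j)) (tl (tl (G (h x)))))"
      using q h x P jl by simp
  qed
  with jl show ?thesis by blast
qed

lemma main:
  "wf_tree \<sigma> \<Longrightarrow> wf_tree \<tau> \<Longrightarrow> tree_le le \<sigma> \<tau> \<longleftrightarrow> seq_emb le (tree_seq \<sigma>) (tree_seq \<tau>)"
proof (induction le \<sigma> \<tau> rule: tree_le.induct)
  case (1 le x y)
  show ?case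
  proof
    assume "tree_le le (Leaf x) (Leaf y)"
    then show "seq_emb le (tree_seq (Leaf x)) (tree_seq (Leaf y))"
      unfolding seq_emb_def by (rule_tac x=id in exI) simp
  next
    assume "seq_emb le (tree_seq (Leaf x)) (tree_seq (Leaf y))"
    then show "tree_le le (Leaf x) (Leaf y)" unfolding seq_emb_def by auto
  qed
next
  case (2 le x ts)
  show ?case
  proof
    assume "tree_le le (Leaf x) (Node ts)"
    then obtain j where j: "j < length ts" "tree_le le (Leaf x) (ts!j)"
      by (auto simp: in_set_conv_nth)
    then have "seq_emb le (tree_seq (Leaf x)) (tree_seq (ts!j))"
      using 2 by (metis nth_mem wf_tree.simps(1) wf_tree.simps(2))
    then obtain g where g: "g [] \<in> fst (tree_seq (ts!j))" "le x (snd (tree_seq (ts!j)) (g []))"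
      unfolding seq_emb_def by auto
    show "seq_emb le (tree_seq (Leaf x)) (tree_seq (Node ts))"
      unfolding seq_emb_def
      apply (rule_tac x="\<lambda>_. 0#j#g []" in exI)
      using g j by (auto simp: pos_node)
  next
    assume "seq_emb le (tree_seq (Leaf x)) (tree_seq (Node ts))"
    then obtain g where g: "g [] \<in> fst (tree_seq (Node ts))" "le x (snd (tree_seq (Node ts)) (g []))"
      unfolding seq_emb_def by auto
    then obtain d j q where dq: "g [] = d#j#q" "j < length ts" "q \<in> fst (tree_seq (ts!j))"
      by (auto simp: pos_node)
    have "seq_emb le (tree_seq (Leaf x)) (tree_seq (ts!j))"
      unfolding seq_emb_def
      apply (rule_tac x="\<lambda>_. q" in exI)
      using g dq by auto
    then have "tree_le le (Leaf x) (ts!j)"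
      using 2 dq(2) by (metis nth_mem wf_tree.simps(1) wf_tree.simps(2))
    then show "tree_le le (Leaf x) (Node ts)" using dq(2) by auto
  qed
next
  case (3 le ss ts)
  have wfs: "\<And>i. i < length ss \<Longrightarrow> wf_tree (ss!i)" using 3 by auto
  have wft: "\<And>j. j < length ts \<Longrightarrow> wf_tree (ts!j)" using 3 by auto
  show ?case
  proof
    assume "tree_le le (Node ss) (Node ts)"
    then have "\<forall>i<length ss. \<exists>jg. fst jg < length ts \<and> (snd jg) ` fst (tree_seq (ss!i)) \<subseteq> fst (tree_seq (ts!fst jg))
      \<and> (\<forall>p\<in>fst (tree_seq (ss!i)). \<forall>p'\<in>fst (tree_seq (ss!i)). pos_less p p' \<longrightarrow> pos_less (snd jg p) (snd jg p'))
      \<and> (\<forall>p\<in>fst (tree_seq (ss!i)). le (snd (tree_seq (ss!i)) p) (snd (tree_seq (ts!fst jg)) (snd jg p)))"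
    proof (intro allI impI)
      fix i assume i: "i < length ss"
      then obtain j where j: "j < length ts" "tree_le le (ss!i) (ts!j)"
        using \<open>tree_le le (Node ss) (Node ts)\<close> by (metis in_set_conv_nth nth_mem tree_le.simps(3))
      then have "seq_emb le (tree_seq (ss!i)) (tree_seq (ts!j))"
        using 3(1)[of "ss!i" "ts!j"] i wfs wft by auto
      then obtain g where "g ` fst (tree_seq (ss!i)) \<subseteq> fst (tree_seq (ts!j))
      \<and> (\<forall>p\<in>fst (tree_seq (ss!i)). \<forall>p'\<in>fst (tree_seq (ss!i)). pos_less p p' \<longrightarrow> pos_less (g p) (g p'))
      \<and> (\<forall>p\<in>fst (tree_seq (ss!i)). le (snd (tree_seq (ss!i)) p) (snd (tree_seq (ts!j)) (g p)))"
        unfolding seq_emb_def by blast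
      then show "\<exists>jg. fst jg < length ts \<and> (snd jg) ` fst (tree_seq (ss!i)) \<subseteq> fst (tree_seq (ts!fst jg))
      \<and> (\<forall>p\<in>fst (tree_seq (ss!i)). \<forall>p'\<in>fst (tree_seq (ss!i)). pos_less p p' \<longrightarrow> pos_less (snd jg p) (snd jg p'))
      \<and> (\<forall>p\<in>fst (tree_seq (ss!i)). le (snd (tree_seq (ss!i)) p) (snd (tree_seq (ts!fst jg)) (snd jg p)))"
        using j by (rule_tac x="(j,g)" in exI) auto
    qed
    then obtain F where F: "\<And>i. i<length ss \<Longrightarrow> fst (F i) < length ts \<and> (snd (F i)) ` fst (tree_seq (ss!i)) \<subseteq> fst (tree_seq (ts!fst (F i)))
      \<and> (\<forall>p\<in>fst (tree_seq (ss!i)). \<forall>p'\<in>fst (tree_seq (ss!i)). pos_less p p' \<longrightarrow> pos_less (snd (F i) p) (snd (F i) p'))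
      \<and> (\<forall>p\<in>fst (tree_seq (ss!i)). le (snd (tree_seq (ss!i)) p) (snd (tree_seq (ts!fst (F i))) (snd (F i) p)))"
      by metis
    define k where "k = length ss"
    define M where "M = (\<lambda>x. (hd x * k + hd (tl x)) # fst (F (hd (tl x))) # snd (F (hd (tl x))) (tl (tl x)))"
    show "seq_emb le (tree_seq (Node ss)) (tree_seq (Node ts))"
      unfolding seq_emb_def
    proof (rule exI[of _ M], intro conjI ballI impI)
      show "M ` fst (tree_seq (Node ss)) \<subseteq> fst (tree_seq (Node ts))"
      proof
        fix y assume "y \<in> M ` fst (tree_seq (Node ss))"
        then obtain d i q where "y = M (d#i#q)" "i < length ss" "q \<in> fst (tree_seq (ss!i))"
          by (auto simp: pos_node)
        then show "y \<in> fst (tree_seq (Node ts))" using F[of i] by (auto simp: pos_node M_def)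
      qed
    next
      fix x y assume xy: "x \<in> fst (tree_seq (Node ss))" "y \<in> fst (tree_seq (Node ss))" "pos_less x y"
      obtain d i q where x: "x = d#i#q" "i < length ss" "q \<in> fst (tree_seq (ss!i))"
        using xy(1) by (auto simp: pos_node)
      obtain d' i' q' where y: "y = d'#i'#q'" "i' < length ss" "q' \<in> fst (tree_seq (ss!i'))"
        using xy(2) by (auto simp: pos_node)
      have "d < d' \<or> d = d' \<and> i < i' \<or> d = d' \<and> i = i' \<and> pos_less q q'" using xy(3) x y by auto
      then show "pos_less (M x) (M y)"
      proof (elim disjE conjE)
        assume "d < d'"
        then have "d * k + i < d' * k + i'"
        proof -
          have "d * k + i < (d+1) * k" using x(2) k_def by simp
          also have "\<dots> \<le> d' * k" using \<open>d < d'\<close> by (intro mult_le_mono1) simp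
          finally show ?thesis by simp
        qed
        then show ?thesis using x y by (simp add: M_def)
      next
        assume "d = d'" "i < i'" then show ?thesis using x y by (simp add: M_def)
      next
        assume "d = d'" "i = i'" "pos_less q q'" then show ?thesis using x y F[of i] by (simp add: M_def)
      qed
    next
      fix x assume "x \<in> fst (tree_seq (Node ss))"
      then obtain d i q where x: "x = d#i#q" "i < length ss" "q \<in> fst (tree_seq (ss!i))"
        by (auto simp: pos_node)
      then show "le (snd (tree_seq (Node ss)) x) (snd (tree_seq (Node ts)) (M x))"
        using F[of i] by (simp add: M_def)
    qed
  next
    assume "seq_emb le (tree_seq (Node ss)) (tree_seq (Node ts))"
    then obtain g where gin: "g ` fst (tree_seq (Node ss)) \<subseteq> fst (tree_seq (Node ts))"
      and gmono: "\<forall>i\<in>fst (tree_seq (Node ss)). \<forall>j\<in>fst (tree_seq (Node ss)). pos_less i j \<longrightarrow> pos_less (g i) (g j)"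
      and glab: "\<forall>i\<in>fst (tree_seq (Node ss)). le (snd (tree_seq (Node ss)) i) (snd (tree_seq (Node ts)) (g i))"
      unfolding seq_emb_def by blast
    show "tree_le le (Node ss) (Node ts)"
      unfolding tree_le.simps
    proof
      fix s assume "s \<in> set ss"
      then obtain i where i: "i < length ss" "s = ss!i" by (auto simp: in_set_conv_nth)
      have "ss \<noteq> []" using i by auto
      then have "fst (tree_seq (ss!0)) \<noteq> {}" using wfs nonempty by auto
      then obtain p0 where p0: "p0 \<in> fst (tree_seq (ss!0))" by auto
      have p1: "1#0#p0 \<in> fst (tree_seq (Node ss))" using p0 \<open>ss \<noteq> []\<close> by (auto simp: pos_node)
      have "g (1#0#p0) \<in> fst (tree_seq (Node ts))" using p1 gin by blast
      then obtain E j0 q0 where E: "g (1#0#p0) = E#j0#q0" unfolding pos_node by blast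
      define G where "G = (\<lambda>p. g (0#i#p))"
      have mem: "\<And>p. p \<in> fst (tree_seq s) \<Longrightarrow> 0#i#p \<in> fst (tree_seq (Node ss))"
        using i by (auto simp: pos_node)
      have "\<exists>j<length ts. seq_emb le (tree_seq s) (tree_seq (ts!j))"
      proof (rule block[of "fst (tree_seq s)" s G ts le E])
        show "wf_tree s" using i wfs by auto
        show "\<forall>x\<in>fst (tree_seq s). G x \<in> fst (tree_seq (Node ts))" using mem gin G_def by auto
        show "\<forall>x\<in>fst (tree_seq s). \<forall>y\<in>fst (tree_seq s). pos_less x y \<longrightarrow> pos_less (G x) (G y)"
          using mem gmono G_def by auto
        show "\<forall>x\<in>fst (tree_seq s). le (snd (tree_seq s) x) (snd (tree_seq (Node ts)) (G x))"
          using mem glab G_def i by fastforce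
        show "\<forall>x\<in>fst (tree_seq s). hd (G x) \<le> E"
        proof
          fix x assume "x \<in> fst (tree_seq s)"
          then have "pos_less (G x) (E#j0#q0)" using mem gmono p1 E G_def by fastforce
          moreover have "G x \<in> fst (tree_seq (Node ts))" using mem[OF \<open>x \<in> fst (tree_seq s)\<close>] gin G_def
            by blast
          then obtain a b c where "G x = a#b#c" unfolding pos_node by blast
          ultimately show "hd (G x) \<le> E" by auto
        qed
      qed simp
      then obtain j where j: "j < length ts" "seq_emb le (tree_seq s) (tree_seq (ts!j))" by blast
      then have "tree_le le s (ts!j)" using 3(1)[of s "ts!j"] \<open>s \<in> set ss\<close> i wfs wft by auto
      then show "\<exists>t\<in>set ts. tree_le le s t" using j by auto
    qed
  qed
next
  case (4 le ss y)
  then have "ss \<noteq> []" by simp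
  then have "fst (tree_seq (ss!0)) \<noteq> {}" using 4 nonempty by (metis length_greater_0_conv nth_mem wf_tree.simps(2))
  then obtain p0 where p0: "p0 \<in> fst (tree_seq (ss!0))" by auto
  have a: "0#0#p0 \<in> fst (tree_seq (Node ss))" and b: "1#0#p0 \<in> fst (tree_seq (Node ss))"
    using p0 \<open>ss \<noteq> []\<close> by (auto simp: pos_node)
  have "\<not> seq_emb le (tree_seq (Node ss)) (tree_seq (Leaf y))"
  proof
    assume "seq_emb le (tree_seq (Node ss)) (tree_seq (Leaf y))"
    then obtain g where "g ` fst (tree_seq (Node ss)) \<subseteq> {[]}"
      "\<forall>i\<in>fst (tree_seq (Node ss)). \<forall>j\<in>fst (tree_seq (Node ss)). pos_less i j \<longrightarrow> pos_less (g i) (g j)"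
      unfolding seq_emb_def by auto
    then have "pos_less (g (0#0#p0)) (g (1#0#p0))" "g (1#0#p0) = []" using a b by auto
    then show False by simp
  qed
  then show ?case by simp
qed

theorem lemma4p18:
  fixes le :: "'q \<Rightarrow> 'q \<Rightarrow> bool"
  assumes "reflp le" and "transp le"
    and "wf_tree \<sigma>" and "wf_tree \<tau>"
  shows "tree_le le \<sigma> \<tau> \<longleftrightarrow> seq_emb le (tree_seq \<sigma>) (tree_seq \<tau>)"
  using main assms(3,4) by blast

end
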